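(* Let $X$ be a Wright--Fisher diffusion on $\Delta_{d-1}=\{x\in[0,1]^d:\sum_i x_i=1\}$ with diffusion coefficient $V_{ij}(x)=x_i(\delta_{ij}-x_j)$ and drift $\mu(x;\varphi)=c(x)+Z(x)\varphi$, where $\varphi\in\mathbb R^r$, $Z(x)$ is a $d\times r$ matrix not depending on $\varphi$ with $a_i(x;\varphi)=\sum_{k=1}^r Z_{ik}(x)\varphi_k$, and $\sum_{i=1}^d c_i(x)=\sum_{i=1}^d Z_{ik}(x)=0$ for all $k$. Call the estimation of $\varphi$ robust to $c$ if the quantity $$\varphi^\top Z^*(x)^\top V^*(x)^{-1}c^*(x)$$ does not depend on $\varphi$, where $Z^*,c^*$ denote the first $d-1$ rows of $Z,c$ and $V^*(x)$ is the upper-left $(d-1)\times(d-1)$ block of $V(x)$ (so $[V^*(x)^{-1}]_{ij}=x_d^{-1}+x_i^{-1}\delta_{ij}$). Then the estimation is robust to $c$ if and only if $$\sum_{i=1}^d\frac{1}{x_i}\frac{\partial a_i}{\partial\varphi_k}(x)\,c_i(x)=0\qquad\text{for each }k=1,\dots,r.$$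
   Context: The estimator in question is $\hat\varphi=\big[\int_0^T Z(X(t))^\top\mathrm{diag}(X(t))^{-1}Z(X(t))\,dt\big]^{-1}Y$ with $Y_k=\int_0^T\sum_{i=1}^d\frac{Z_{ik}(X(t))}{X_i(t)}d\widetilde X_i(t)$ and $\widetilde X(t)=X(t)-\int_0^tc(X(s))ds$; the term $c$ represents a known (possibly confounding) drift contribution and robustness means, as defined in the claim, that $c$ does not enter the $\varphi$-dependent part of the likelihood via the cross term. *)

theory Defs
  imports "HOL-Analysis.Analysis" "Jordan_Normal_Form.Gauss_Jordan_Elimination"
begin

text \<open>Coordinates are 0-based: paper index i (1..d) is index i-1 here, so the
  last coordinate x_d is x (d-1).\<close>

text \<open>Open simplex: the points of the simplex with all coordinates positive
  (where 1/x_i and V* inverse make sense).\<close>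
definition open_simplex :: "nat \<Rightarrow> (nat \<Rightarrow> real) set" where
  "open_simplex d = {x. (\<forall>i<d. 0 < x i) \<and> (\<Sum>i<d. x i) = 1}"

definition WF_V :: "nat \<Rightarrow> (nat \<Rightarrow> real) \<Rightarrow> real mat" where
  "WF_V d x = mat d d (\<lambda>(i,j). x i * ((if i = j then 1 else 0) - x j))"

definition WF_Vstar :: "nat \<Rightarrow> (nat \<Rightarrow> real) \<Rightarrow> real mat" where
  "WF_Vstar d x = mat (d - 1) (d - 1) (\<lambda>(i,j). WF_V d x $$ (i,j))"

definition Zstar :: "nat \<Rightarrow> nat \<Rightarrow> (nat \<Rightarrow> nat \<Rightarrow> real) \<Rightarrow> real mat" where
  "Zstar d r Zx = mat (d - 1) r (\<lambda>(i,k). Zx i k)"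

definition cstar :: "nat \<Rightarrow> (nat \<Rightarrow> real) \<Rightarrow> real vec" where
  "cstar d cx = vec (d - 1) cx"

definition robust_quantity ::
  "nat \<Rightarrow> nat \<Rightarrow> (nat \<Rightarrow> real) \<Rightarrow> (nat \<Rightarrow> nat \<Rightarrow> real) \<Rightarrow> (nat \<Rightarrow> real) \<Rightarrow> real vec \<Rightarrow> real" where
  "robust_quantity d r x Zx cx \<phi> =
     \<phi> \<bullet> ((transpose_mat (Zstar d r Zx) * the (mat_inverse (WF_Vstar d x))) *\<^sub>v cstar d cx)"

definition robust_to_c ::
  "nat \<Rightarrow> nat \<Rightarrow> ((nat \<Rightarrow> real) \<Rightarrow> nat \<Rightarrow> nat \<Rightarrow> real) \<Rightarrow> ((nat \<Rightarrow> real) \<Rightarrow> nat \<Rightarrow> real) \<Rightarrow> bool" where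
  "robust_to_c d r Z c \<longleftrightarrow>
     (\<forall>x \<in> open_simplex d. \<forall>\<phi> \<in> carrier_vec r. \<forall>\<psi> \<in> carrier_vec r.
        robust_quantity d r x (Z x) (c x) \<phi> = robust_quantity d r x (Z x) (c x) \<psi>)"

definition WF_a :: "nat \<Rightarrow> (nat \<Rightarrow> nat \<Rightarrow> real) \<Rightarrow> real vec \<Rightarrow> nat \<Rightarrow> real" where
  "WF_a r Zx \<phi> i = (\<Sum>k<r. Zx i k * \<phi> $ k)"

definition partial_a :: "nat \<Rightarrow> (nat \<Rightarrow> nat \<Rightarrow> real) \<Rightarrow> real vec \<Rightarrow> nat \<Rightarrow> nat \<Rightarrow> real" where
  "partial_a r Zx \<phi> i k =
     deriv (\<lambda>t. WF_a r Zx (vec r (\<lambda>j. if j = k then t else \<phi> $ j)) i) (\<phi> $ k)"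

end

theory Submission imports Defs "Jordan_Normal_Form.Determinant" begin

lemma partial_a_eq:
  assumes "k < r" shows "partial_a r Zx \<phi> i k = Zx i k"
proof -
  have eq: "(\<lambda>t. WF_a r Zx (vec r (\<lambda>j. if j = k then t else \<phi> $ j)) i)
     = (\<lambda>t. \<Sum>j<r. Zx i j * (if j = k then t else \<phi> $ j))"
    unfolding WF_a_def by (intro ext sum.cong) auto
  have "((\<lambda>t. \<Sum>j<r. Zx i j * (if j = k then t else \<phi> $ j)) has_real_derivative
        (\<Sum>j<r. Zx i j * (if j = k then 1 else 0))) (at (\<phi> $ k))"
    by (intro DERIV_sum) (auto intro!: derivative_eq_intros)
  moreover have "(\<Sum>j<r. Zx i j * (if j = k then 1 else 0)) = Zx i k"
    using assms by (simp add: sum.delta if_distrib cong: if_cong)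
  ultimately show ?thesis unfolding partial_a_def eq by (simp add: DERIV_imp_deriv)
qed


definition Minv :: "nat \<Rightarrow> (nat \<Rightarrow> real) \<Rightarrow> real mat" where
  "Minv d x = mat (d - 1) (d - 1) (\<lambda>(i,j). 1 / x (d - 1) + (if i = j then 1 / x i else 0))"

lemma Vstar_Minv:
  assumes x: "x \<in> open_simplex d" and d: "1 \<le> d"
  shows "WF_Vstar d x * Minv d x = 1\<^sub>m (d - 1)"
proof (rule eq_matI)
  fix i j assume i: "i < dim_row (1\<^sub>m (d - 1) :: real mat)" and j: "j < dim_col (1\<^sub>m (d - 1) :: real mat)"
  let ?n = "d - 1"
  have pos: "\<And>l. l < d \<Longrightarrow> x l > 0" and s: "(\<Sum>l<d. x l) = 1" using x by (auto simp: open_simplex_def)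
  have S: "(\<Sum>l<?n. x l) = 1 - x ?n"
    using s d by (metis (no_types, lifting) add_diff_cancel_right' le_add_diff_inverse2 lessThan_Suc sum.lessThan_Suc plus_1_eq_Suc add.commute)
  have in_: "i < ?n" "j < ?n" using i j by auto
  have xi: "x i > 0" "x ?n > 0" using pos in_ d by auto
  have "(WF_Vstar d x * Minv d x) $$ (i,j) =
     (\<Sum>l<?n. x i * ((if i = l then 1 else 0) - x l) * (1 / x ?n + (if l = j then 1 / x l else 0)))"
    using in_ by (simp add: WF_Vstar_def WF_V_def Minv_def scalar_prod_def row_def col_def atLeast0LessThan)
  also have "\<dots> = (\<Sum>l<?n. (if l = i then x i / x ?n else 0)
       + (if l = i then (if i = j then 1 else 0) else 0)
       - x i * x l / x ?n - (if l = j then x i else 0))"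
  proof (intro sum.cong refl)
    fix l assume "l \<in> {..<?n}"
    then have "l < d" by auto
    then have xl: "x l \<noteq> 0" using pos by (metis less_irrefl)
    have xn: "x ?n \<noteq> 0" using xi by simp
    show "x i * ((if i = l then 1 else 0) - x l) * (1 / x ?n + (if l = j then 1 / x l else 0)) =
      (if l = i then x i / x ?n else 0) + (if l = i then (if i = j then 1 else 0) else 0)
       - x i * x l / x ?n - (if l = j then x i else 0)"
      using xl xn by (cases "l = i"; cases "l = j") (simp_all add: field_simps)
  qed
  also have "\<dots> = x i / x ?n + (if i = j then 1 else 0) - x i * (1 - x ?n) / x ?n - x i"
    using in_ by (simp add: sum.distrib sum_subtractf sum_divide_distrib[symmetric]
        sum_distrib_left[symmetric] S[simplified])
  also have "\<dots> = (if i = j then 1 else 0) + (x i / x ?n - x i * (1 - x ?n) / x ?n - x i)"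
    by simp
  also have "x i / x ?n - x i * (1 - x ?n) / x ?n - x i = 0"
    using xi(2) by (simp add: field_simps)
  also have "(if i = j then 1 else 0) + 0 = (1\<^sub>m ?n :: real mat) $$ (i,j)" using in_ by simp
  finally show "(WF_Vstar d x * Minv d x) $$ (i,j) = 1\<^sub>m ?n $$ (i,j)" .
qed (auto simp: WF_Vstar_def Minv_def)

lemma Minv_carrier: "Minv d x \<in> carrier_mat (d - 1) (d - 1)" by (simp add: Minv_def)
lemma Vstar_carrier: "WF_Vstar d x \<in> carrier_mat (d - 1) (d - 1)" by (simp add: WF_Vstar_def)

lemma inv_eq:
  assumes x: "x \<in> open_simplex d" and d: "1 \<le> d"
  shows "the (mat_inverse (WF_Vstar d x)) = Minv d x"
proof -
  let ?A = "WF_Vstar d x" and ?M = "Minv d x" and ?n = "d - 1"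
  have AM: "?A * ?M = 1\<^sub>m ?n" by (rule Vstar_Minv[OF x d])
  have MA: "?M * ?A = 1\<^sub>m ?n"
    by (rule mat_mult_left_right_inverse[OF Vstar_carrier Minv_carrier AM])
  show ?thesis
  proof (cases "mat_inverse ?A")
    case None
    from mat_inverse(1)[OF Vstar_carrier None, of undefined]
    have "?A \<notin> Units (ring_mat TYPE(real) ?n undefined)" .
    moreover have "?A \<in> Units (ring_mat TYPE(real) ?n undefined)"
      unfolding Units_def using AM MA Vstar_carrier Minv_carrier
      by (auto simp: ring_mat_simps)
    ultimately show ?thesis by blast
  next
    case (Some B)
    from mat_inverse(2)[OF Vstar_carrier Some]
    have AB: "?A * B = 1\<^sub>m ?n" and B: "B \<in> carrier_mat ?n ?n" by auto
    have "?M = ?M * (?A * B)" unfolding AB by (rule right_mult_one_mat[OF Minv_carrier, symmetric])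
    also have "\<dots> = (?M * ?A) * B"
      using assoc_mult_mat[OF Minv_carrier Vstar_carrier B] by simp
    also have "\<dots> = B" using MA B by simp
    finally show ?thesis using Some by simp
  qed
qed

lemma quantity_eq:
  assumes x: "x \<in> open_simplex d" and d: "1 \<le> d"
    and cs: "(\<Sum>i<d. cx i) = 0"
    and Zs: "\<And>k. k < r \<Longrightarrow> (\<Sum>i<d. Zx i k) = 0"
  shows "(transpose_mat (Zstar d r Zx) * the (mat_inverse (WF_Vstar d x))) *\<^sub>v cstar d cx
        = vec r (\<lambda>k. \<Sum>i<d. Zx i k * cx i / x i)"
proof -
  let ?n = "d - 1"
  have dn: "d = Suc ?n" using d by simp
  have csn: "(\<Sum>i<?n. cx i) = - cx ?n" using cs dn by (metis add.commute add_eq_0_iff sum.lessThan_Suc)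
  have Mc: "Minv d x *\<^sub>v cstar d cx = vec ?n (\<lambda>i. cx i / x i - cx ?n / x ?n)"
  proof (rule eq_vecI)
    fix i assume "i < dim_vec (vec ?n (\<lambda>i. cx i / x i - cx ?n / x ?n))"
    then have i: "i < ?n" by simp
    have "(Minv d x *\<^sub>v cstar d cx) $ i = (\<Sum>j<?n. (1 / x ?n + (if i = j then 1 / x i else 0)) * cx j)"
      using i by (simp add: Minv_def cstar_def mult_mat_vec_def scalar_prod_def row_def atLeast0LessThan)
    also have "\<dots> = (\<Sum>j<?n. cx j / x ?n + (if j = i then cx i / x i else 0))"
      by (intro sum.cong refl) (auto simp: algebra_simps)
    also have "\<dots> = (\<Sum>j<?n. cx j) / x ?n + cx i / x i"
      using i by (simp add: sum.distrib sum_divide_distrib)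
    also have "\<dots> = cx i / x i - cx ?n / x ?n" using csn by simp
    finally show "(Minv d x *\<^sub>v cstar d cx) $ i = vec ?n (\<lambda>i. cx i / x i - cx ?n / x ?n) $ i"
      using i by simp
  qed (simp add: Minv_def)
  show ?thesis
  proof (rule eq_vecI)
    fix k assume "k < dim_vec (vec r (\<lambda>k. \<Sum>i<d. Zx i k * cx i / x i))"
    then have k: "k < r" by simp
    have Zsn: "(\<Sum>i<?n. Zx i k) = - Zx ?n k" using Zs[OF k] dn
      by (metis add.commute add_eq_0_iff sum.lessThan_Suc)
    have "(transpose_mat (Zstar d r Zx) * the (mat_inverse (WF_Vstar d x))) *\<^sub>v cstar d cx
       = transpose_mat (Zstar d r Zx) *\<^sub>v (Minv d x *\<^sub>v cstar d cx)"
      unfolding inv_eq[OF x d]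
      by (rule assoc_mult_mat_vec[of _ r ?n _ ?n]) (auto simp: Zstar_def Minv_def cstar_def)
    also have "\<dots> $ k = (\<Sum>i<?n. Zx i k * (cx i / x i - cx ?n / x ?n))"
      using k unfolding Mc by (simp add: Zstar_def mult_mat_vec_def scalar_prod_def row_def atLeast0LessThan)
    also have "\<dots> = (\<Sum>i<?n. Zx i k * cx i / x i) - (\<Sum>i<?n. Zx i k) * cx ?n / x ?n"
      by (simp add: right_diff_distrib sum_subtractf sum_distrib_right sum_divide_distrib mult.assoc times_divide_eq_right)
    also have "\<dots> = (\<Sum>i<d. Zx i k * cx i / x i)"
      using Zsn dn by (metis (no_types, lifting) diff_minus_eq_add minus_divide_left mult_minus_left sum.lessThan_Suc)
    finally show "((transpose_mat (Zstar d r Zx) * the (mat_inverse (WF_Vstar d x))) *\<^sub>v cstar d cx) $ k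
        = vec r (\<lambda>k. \<Sum>i<d. Zx i k * cx i / x i) $ k" using k by simp
  qed (simp add: Zstar_def)
qed

theorem proposition2:
  fixes d r :: nat
    and Z :: "(nat \<Rightarrow> real) \<Rightarrow> nat \<Rightarrow> nat \<Rightarrow> real"
    and c :: "(nat \<Rightarrow> real) \<Rightarrow> nat \<Rightarrow> real"
  assumes d_pos: "1 \<le> d"
    and c_sum: "\<And>x. x \<in> open_simplex d \<Longrightarrow> (\<Sum>i<d. c x i) = 0"
    and Z_sum: "\<And>x k. x \<in> open_simplex d \<Longrightarrow> k < r \<Longrightarrow> (\<Sum>i<d. Z x i k) = 0"
  shows "robust_to_c d r Z c \<longleftrightarrow>
    (\<forall>x \<in> open_simplex d. \<forall>\<phi> \<in> carrier_vec r. \<forall>k<r.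
       (\<Sum>i<d. (1 / x i) * partial_a r (Z x) \<phi> i k * c x i) = 0)"
proof -
  define w where "w x = vec r (\<lambda>k. \<Sum>i<d. Z x i k * c x i / x i)" for x
  have wc: "w x \<in> carrier_vec r" for x by (simp add: w_def)
  have Q: "robust_quantity d r x (Z x) (c x) \<phi> = \<phi> \<bullet> w x" if x: "x \<in> open_simplex d" for x \<phi>
    unfolding robust_quantity_def w_def
    using quantity_eq[OF x d_pos c_sum[OF x] Z_sum[OF x]] by simp
  have L: "robust_to_c d r Z c \<longleftrightarrow> (\<forall>x \<in> open_simplex d. \<forall>k<r. w x $ k = 0)"
  proof
    assume R: "robust_to_c d r Z c"
    show "\<forall>x \<in> open_simplex d. \<forall>k<r. w x $ k = 0"
    proof (intro ballI allI impI)
      fix x k assume x: "x \<in> open_simplex d" and k: "k < r"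
      have "robust_quantity d r x (Z x) (c x) (unit_vec r k) = robust_quantity d r x (Z x) (c x) (0\<^sub>v r)"
        using R x unfolding robust_to_c_def by auto
      then show "w x $ k = 0" using Q[OF x] wc k by simp
    qed
  next
    assume W: "\<forall>x \<in> open_simplex d. \<forall>k<r. w x $ k = 0"
    have "w x = 0\<^sub>v r" if "x \<in> open_simplex d" for x
      using W that wc by (intro eq_vecI) auto
    then show "robust_to_c d r Z c"
      unfolding robust_to_c_def using Q by simp
  qed
  have T: "(\<Sum>i<d. (1 / x i) * partial_a r (Z x) \<phi> i k * c x i) = w x $ k" if "k < r" for x \<phi> k
    using that by (simp add: partial_a_eq w_def)
  show ?thesis unfolding L using T by (auto intro: zero_carrier_vec)
qed

end
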